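(* Let $L$ be a C-loop with nucleus $N$. Then the factor loop $L/N$ is a Steiner loop.
   Context: A C-loop is a loop satisfying $x(y(yz))=((xy)y)z$ for all $x,y,z$. The nucleus $N$ of a loop is the set of elements $a$ with $a(yz)=(ay)z$, $y(az)=(ya)z$, $y(za)=(yz)a$ for all $y,z$; in a C-loop it is a normal subloop (normal meaning $xN=Nx$, $x(yN)=(xy)N$, $x(Ny)=(xN)y$ for all $x,y$), and $L/N$ is the factor loop of cosets. A Steiner loop is a loop with neutral element $e$ satisfying $xx=e$, $(yx)x=y$, $xy=yx$ for all $x,y$. *)

theory Defs
  imports Main
begin

definition loop :: "'a set \<Rightarrow> ('a \<Rightarrow> 'a \<Rightarrow> 'a) \<Rightarrow> 'a \<Rightarrow> bool" where
  "loop L m e \<longleftrightarrow> e \<in> L \<and> (\<forall>x\<in>L. \<forall>y\<in>L. m x y \<in> L)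
     \<and> (\<forall>x\<in>L. m e x = x \<and> m x e = x)
     \<and> (\<forall>a\<in>L. \<forall>b\<in>L. \<exists>!x. x \<in> L \<and> m a x = b)
     \<and> (\<forall>a\<in>L. \<forall>b\<in>L. \<exists>!y. y \<in> L \<and> m y a = b)"

definition C_loop :: "'a set \<Rightarrow> ('a \<Rightarrow> 'a \<Rightarrow> 'a) \<Rightarrow> 'a \<Rightarrow> bool" where
  "C_loop L m e \<longleftrightarrow> loop L m e \<and>
     (\<forall>x\<in>L. \<forall>y\<in>L. \<forall>z\<in>L. m x (m y (m y z)) = m (m (m x y) y) z)"

definition nucleus :: "'a set \<Rightarrow> ('a \<Rightarrow> 'a \<Rightarrow> 'a) \<Rightarrow> 'a set" where
  "nucleus L m = {a \<in> L. \<forall>y\<in>L. \<forall>z\<in>L.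
      m a (m y z) = m (m a y) z \<and> m y (m a z) = m (m y a) z \<and> m y (m z a) = m (m y z) a}"

definition lcoset :: "('a \<Rightarrow> 'a \<Rightarrow> 'a) \<Rightarrow> 'a \<Rightarrow> 'a set \<Rightarrow> 'a set" where
  "lcoset m x N = (\<lambda>n. m x n) ` N"

definition factor_carrier :: "'a set \<Rightarrow> ('a \<Rightarrow> 'a \<Rightarrow> 'a) \<Rightarrow> 'a set \<Rightarrow> 'a set set" where
  "factor_carrier L m N = (\<lambda>x. lcoset m x N) ` L"

definition factor_mult :: "('a \<Rightarrow> 'a \<Rightarrow> 'a) \<Rightarrow> 'a set \<Rightarrow> 'a set \<Rightarrow> 'a set \<Rightarrow> 'a set" where
  "factor_mult m N A B = lcoset m (m (SOME a. a \<in> A) (SOME b. b \<in> B)) N"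

definition steiner_loop :: "'a set \<Rightarrow> ('a \<Rightarrow> 'a \<Rightarrow> 'a) \<Rightarrow> 'a \<Rightarrow> bool" where
  "steiner_loop L m e \<longleftrightarrow> loop L m e \<and>
     (\<forall>x\<in>L. \<forall>y\<in>L. m x x = e \<and> m (m y x) x = y \<and> m x y = m y x)"

end

theory Submission
  imports Defs
begin

locale cl =
  fixes L :: "'a set" and m :: "'a \<Rightarrow> 'a \<Rightarrow> 'a" (infixl "\<cdot>" 70) and e :: 'a
  assumes C: "C_loop L m e"
begin

lemma eL[simp]: "e \<in> L" using C unfolding C_loop_def loop_def by auto
lemma clos[simp]: "x \<in> L \<Longrightarrow> y \<in> L \<Longrightarrow> x \<cdot> y \<in> L"
  using C unfolding C_loop_def loop_def by auto
lemma el[simp]: "x \<in> L \<Longrightarrow> e \<cdot> x = x" using C unfolding C_loop_def loop_def by auto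
lemma er[simp]: "x \<in> L \<Longrightarrow> x \<cdot> e = x" using C unfolding C_loop_def loop_def by auto
lemma ldivu: "a \<in> L \<Longrightarrow> b \<in> L \<Longrightarrow> \<exists>!x. x \<in> L \<and> a \<cdot> x = b"
  using C unfolding C_loop_def loop_def by auto
lemma rdivu: "a \<in> L \<Longrightarrow> b \<in> L \<Longrightarrow> \<exists>!x. x \<in> L \<and> x \<cdot> a = b"
  using C unfolding C_loop_def loop_def by auto
lemma Claw: "x \<in> L \<Longrightarrow> y \<in> L \<Longrightarrow> z \<in> L \<Longrightarrow> x \<cdot> (y \<cdot> (y \<cdot> z)) = ((x \<cdot> y) \<cdot> y) \<cdot> z"
  using C unfolding C_loop_def by auto

lemma lcan: "a \<in> L \<Longrightarrow> x \<in> L \<Longrightarrow> y \<in> L \<Longrightarrow> a \<cdot> x = a \<cdot> y \<Longrightarrow> x = y"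
  using ldivu[of a "a \<cdot> x"] by auto
lemma rcan: "a \<in> L \<Longrightarrow> x \<in> L \<Longrightarrow> y \<in> L \<Longrightarrow> x \<cdot> a = y \<cdot> a \<Longrightarrow> x = y"
  using rdivu[of a "x \<cdot> a"] by auto
lemma ldiv: "a \<in> L \<Longrightarrow> b \<in> L \<Longrightarrow> \<exists>x\<in>L. a \<cdot> x = b" using ldivu by blast
lemma rdiv: "a \<in> L \<Longrightarrow> b \<in> L \<Longrightarrow> \<exists>x\<in>L. x \<cdot> a = b" using rdivu by blast

definition iv where "iv x = (THE y. y \<in> L \<and> x \<cdot> y = e)"

lemma iv: "x \<in> L \<Longrightarrow> iv x \<in> L \<and> x \<cdot> iv x = e"
  unfolding iv_def using theI'[OF ldivu[of x e]] by simp
lemma ivL[simp]: "x \<in> L \<Longrightarrow> iv x \<in> L" using iv by blast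
lemma rinv[simp]: "x \<in> L \<Longrightarrow> x \<cdot> iv x = e" using iv by blast

lemma LAlt: "y \<in> L \<Longrightarrow> z \<in> L \<Longrightarrow> y \<cdot> (y \<cdot> z) = (y \<cdot> y) \<cdot> z"
  using Claw[of e y z] by simp
lemma RAlt: "x \<in> L \<Longrightarrow> y \<in> L \<Longrightarrow> (x \<cdot> y) \<cdot> y = x \<cdot> (y \<cdot> y)"
  using Claw[of x y e] by simp

lemma RIP[simp]: "y \<in> L \<Longrightarrow> w \<in> L \<Longrightarrow> (w \<cdot> y) \<cdot> iv y = w"
proof -
  assume y: "y \<in> L" and w: "w \<in> L"
  obtain x where x: "x \<in> L" "x \<cdot> y = w" using rdiv[OF y w] by blast
  have "x \<cdot> (y \<cdot> (y \<cdot> iv y)) = ((x \<cdot> y) \<cdot> y) \<cdot> iv y" using Claw[of x y "iv y"] x y by simp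
  then show ?thesis using x y by simp
qed

lemma linv[simp]: "y \<in> L \<Longrightarrow> iv y \<cdot> y = e"
proof -
  assume y: "y \<in> L"
  obtain l where l: "l \<in> L" "l \<cdot> y = e" using rdiv[OF y eL] by blast
  have lu: "l \<cdot> (y \<cdot> u) = u" if u: "u \<in> L" for u
  proof -
    obtain z where z: "z \<in> L" "y \<cdot> z = u" using ldiv[OF y u] by blast
    have "l \<cdot> (y \<cdot> (y \<cdot> z)) = ((l \<cdot> y) \<cdot> y) \<cdot> z" using Claw[of l y z] l y z by simp
    then show ?thesis using l y z(1) by (simp add: z(2)[symmetric])
  qed
  have "l \<cdot> (y \<cdot> iv y) = iv y" using lu[of "iv y"] y by simp
  hence "l = iv y" using l y by simp
  then show ?thesis using l by simp
qed

lemma LIP[simp]: "y \<in> L \<Longrightarrow> u \<in> L \<Longrightarrow> iv y \<cdot> (y \<cdot> u) = u"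
proof -
  assume y: "y \<in> L" and u: "u \<in> L"
  obtain z where z: "z \<in> L" "y \<cdot> z = u" using ldiv[OF y u] by blast
  have "iv y \<cdot> (y \<cdot> (y \<cdot> z)) = ((iv y \<cdot> y) \<cdot> y) \<cdot> z" using Claw[of "iv y" y z] y z by simp
  then show ?thesis using y z(1) by (simp add: z(2)[symmetric])
qed

lemma ivv[simp]: "y \<in> L \<Longrightarrow> iv (iv y) = y"
  using lcan[of "iv y" "iv (iv y)" y] by simp

lemma LIP2[simp]: "y \<in> L \<Longrightarrow> u \<in> L \<Longrightarrow> y \<cdot> (iv y \<cdot> u) = u"
  using LIP[of "iv y" u] by simp
lemma RIP2[simp]: "y \<in> L \<Longrightarrow> w \<in> L \<Longrightarrow> (w \<cdot> iv y) \<cdot> y = w"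
  using RIP[of "iv y" w] by simp

lemma iv_mult: "a \<in> L \<Longrightarrow> b \<in> L \<Longrightarrow> iv (a \<cdot> b) = iv b \<cdot> iv a"
proof -
  assume a: "a \<in> L" and b: "b \<in> L"
  have 2: "b \<cdot> iv (a \<cdot> b) = iv a" using RIP[of "a \<cdot> b" "iv a"] a b by simp
  have "iv b \<cdot> (b \<cdot> iv (a \<cdot> b)) = iv (a \<cdot> b)" using a b by simp
  then show ?thesis using 2 by simp
qed

definition "midn t \<longleftrightarrow> (\<forall>x\<in>L. \<forall>z\<in>L. x \<cdot> (t \<cdot> z) = (x \<cdot> t) \<cdot> z)"
definition "rtn t \<longleftrightarrow> (\<forall>x\<in>L. \<forall>z\<in>L. x \<cdot> (z \<cdot> t) = (x \<cdot> z) \<cdot> t)"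
definition "lfn t \<longleftrightarrow> (\<forall>y\<in>L. \<forall>z\<in>L. t \<cdot> (y \<cdot> z) = (t \<cdot> y) \<cdot> z)"

lemma nuc_iff: "a \<in> nucleus L m \<longleftrightarrow> a \<in> L \<and> lfn a \<and> midn a \<and> rtn a"
  unfolding nucleus_def lfn_def midn_def rtn_def by auto

lemma mid_rt: assumes t: "t \<in> L" and M: "midn t" shows "rtn (iv t)"
  unfolding rtn_def
proof (intro ballI)
  fix v u assume v: "v \<in> L" and u: "u \<in> L"
  have 1: "((v \<cdot> u) \<cdot> iv t) \<cdot> (t \<cdot> iv u) = v"
    using M[unfolded midn_def, rule_format, of "(v \<cdot> u) \<cdot> iv t" "iv u"] t u v by simp
  have "(v \<cdot> u) \<cdot> iv t = (((v \<cdot> u) \<cdot> iv t) \<cdot> (t \<cdot> iv u)) \<cdot> iv (t \<cdot> iv u)"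
    using t u v by simp
  also have "\<dots> = v \<cdot> (u \<cdot> iv t)" using 1 iv_mult t u by simp
  finally show "v \<cdot> (u \<cdot> iv t) = (v \<cdot> u) \<cdot> iv t" by simp
qed

lemma rt_lf: assumes t: "t \<in> L" and R: "rtn t" shows "lfn (iv t)"
  unfolding lfn_def
proof (intro ballI)
  fix y z assume y: "y \<in> L" and z: "z \<in> L"
  have "iv z \<cdot> (iv y \<cdot> t) = (iv z \<cdot> iv y) \<cdot> t"
    using R[unfolded rtn_def, rule_format, of "iv z" "iv y"] y z by simp
  hence "iv (iv z \<cdot> (iv y \<cdot> t)) = iv ((iv z \<cdot> iv y) \<cdot> t)" by simp
  then show "iv t \<cdot> (y \<cdot> z) = (iv t \<cdot> y) \<cdot> z" using t y z by (simp add: iv_mult)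
qed

lemma mid_mid: assumes t: "t \<in> L" and M: "midn t" shows "midn (iv t)"
  unfolding midn_def
proof (intro ballI)
  fix x z assume x: "x \<in> L" and z: "z \<in> L"
  have "iv z \<cdot> (t \<cdot> iv x) = (iv z \<cdot> t) \<cdot> iv x"
    using M[unfolded midn_def, rule_format, of "iv z" "iv x"] x z by simp
  hence "iv (iv z \<cdot> (t \<cdot> iv x)) = iv ((iv z \<cdot> t) \<cdot> iv x)" by simp
  then show "x \<cdot> (iv t \<cdot> z) = (x \<cdot> iv t) \<cdot> z" using t x z by (simp add: iv_mult)
qed

abbreviation "N \<equiv> nucleus L m"

lemma nucL: "a \<in> N \<Longrightarrow> a \<in> L" by (simp add: nuc_iff)
lemma nlf: "a \<in> N \<Longrightarrow> y \<in> L \<Longrightarrow> z \<in> L \<Longrightarrow> a \<cdot> (y \<cdot> z) = (a \<cdot> y) \<cdot> z"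
  by (simp add: nuc_iff lfn_def)
lemma nmid: "a \<in> N \<Longrightarrow> y \<in> L \<Longrightarrow> z \<in> L \<Longrightarrow> y \<cdot> (a \<cdot> z) = (y \<cdot> a) \<cdot> z"
  by (simp add: nuc_iff midn_def)
lemma nrt: "a \<in> N \<Longrightarrow> y \<in> L \<Longrightarrow> z \<in> L \<Longrightarrow> y \<cdot> (z \<cdot> a) = (y \<cdot> z) \<cdot> a"
  by (simp add: nuc_iff rtn_def)

lemma sq_mid: "y \<in> L \<Longrightarrow> midn (y \<cdot> y)"
  unfolding midn_def using LAlt RAlt Claw by (metis)

lemma sqN: assumes y: "y \<in> L" shows "y \<cdot> y \<in> N"
proof -
  let ?s = "y \<cdot> y"
  have s: "?s \<in> L" using y by simp
  have ms: "midn ?s" using sq_mid y by blast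
  have mt: "midn (iv ?s)" using mid_mid s ms by blast
  have "rtn (iv (iv ?s))" using mid_rt[OF _ mt] s by simp
  hence r: "rtn ?s" using s by simp
  have "lfn (iv (iv ?s))" using rt_lf[OF _ mid_rt[OF s ms]] s by simp
  hence "lfn ?s" using s by simp
  then show ?thesis using r ms s by (simp add: nuc_iff)
qed

lemma eN: "e \<in> N" by (simp add: nuc_iff lfn_def midn_def rtn_def)

lemma ivN: assumes a: "a \<in> N" shows "iv a \<in> N"
proof -
  have aL: "a \<in> L" using a nucL by blast
  have "midn (iv a)" using mid_mid aL a by (simp add: nuc_iff)
  moreover have "rtn (iv a)" using mid_rt aL a by (simp add: nuc_iff)
  moreover have "lfn (iv a)" using rt_lf aL a by (simp add: nuc_iff)
  ultimately show ?thesis using aL by (simp add: nuc_iff)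
qed

lemma multN: assumes a: "a \<in> N" and b: "b \<in> N" shows "a \<cdot> b \<in> N"
proof -
  have aL: "a \<in> L" and bL: "b \<in> L" using a b nucL by auto
  have "lfn (a \<cdot> b)" unfolding lfn_def
  proof (intro ballI)
    fix y z assume y: "y \<in> L" and z: "z \<in> L"
    have "(a \<cdot> b) \<cdot> (y \<cdot> z) = a \<cdot> (b \<cdot> (y \<cdot> z))" using nlf[OF a, of b "y \<cdot> z"] y z bL by simp
    also have "\<dots> = a \<cdot> ((b \<cdot> y) \<cdot> z)" using nlf[OF b, of y z] y z by simp
    also have "\<dots> = (a \<cdot> (b \<cdot> y)) \<cdot> z" using nlf[OF a, of "b \<cdot> y" z] y z bL by simp
    also have "\<dots> = ((a \<cdot> b) \<cdot> y) \<cdot> z" using nlf[OF a, of b y] y z bL by simp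
    finally show "(a \<cdot> b) \<cdot> (y \<cdot> z) = ((a \<cdot> b) \<cdot> y) \<cdot> z" .
  qed
  moreover have "midn (a \<cdot> b)" unfolding midn_def
  proof (intro ballI)
    fix y z assume y: "y \<in> L" and z: "z \<in> L"
    have "y \<cdot> ((a \<cdot> b) \<cdot> z) = y \<cdot> (a \<cdot> (b \<cdot> z))" using nlf[OF a, of b z] z bL by simp
    also have "\<dots> = (y \<cdot> a) \<cdot> (b \<cdot> z)" using nmid[OF a, of y "b \<cdot> z"] y z bL by simp
    also have "\<dots> = ((y \<cdot> a) \<cdot> b) \<cdot> z" using nmid[OF b, of "y \<cdot> a" z] y z aL by simp
    also have "\<dots> = (y \<cdot> (a \<cdot> b)) \<cdot> z" using nrt[OF b, of y a] y aL by simp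
    finally show "y \<cdot> ((a \<cdot> b) \<cdot> z) = (y \<cdot> (a \<cdot> b)) \<cdot> z" .
  qed
  moreover have "rtn (a \<cdot> b)" unfolding rtn_def
  proof (intro ballI)
    fix y z assume y: "y \<in> L" and z: "z \<in> L"
    have "y \<cdot> (z \<cdot> (a \<cdot> b)) = y \<cdot> ((z \<cdot> a) \<cdot> b)" using nrt[OF b, of z a] z aL by simp
    also have "\<dots> = (y \<cdot> (z \<cdot> a)) \<cdot> b" using nrt[OF b, of y "z \<cdot> a"] y z aL by simp
    also have "\<dots> = ((y \<cdot> z) \<cdot> a) \<cdot> b" using nrt[OF a, of y z] y z by simp
    also have "\<dots> = (y \<cdot> z) \<cdot> (a \<cdot> b)" using nrt[OF b, of "y \<cdot> z" a] y z aL by simp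
    finally show "y \<cdot> (z \<cdot> (a \<cdot> b)) = (y \<cdot> z) \<cdot> (a \<cdot> b)" .
  qed
  ultimately show ?thesis using aL bL by (simp add: nuc_iff)
qed

lemma xnx: assumes x: "x \<in> L" and n: "n \<in> N" shows "x \<cdot> (n \<cdot> x) \<in> N"
proof -
  have nL: "n \<in> L" using n nucL by blast
  have "(x \<cdot> n) \<cdot> (x \<cdot> n) = x \<cdot> (n \<cdot> (x \<cdot> n))" using nmid[OF n, of x "x \<cdot> n"] x nL by simp
  also have "\<dots> = x \<cdot> ((n \<cdot> x) \<cdot> n)" using nrt[OF n, of n x] x nL by simp
  also have "\<dots> = (x \<cdot> (n \<cdot> x)) \<cdot> n" using nrt[OF n, of x "n \<cdot> x"] x nL by simp
  finally have "(x \<cdot> (n \<cdot> x)) \<cdot> n \<in> N" using sqN[of "x \<cdot> n"] x nL by simp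
  hence "((x \<cdot> (n \<cdot> x)) \<cdot> n) \<cdot> iv n \<in> N" using multN ivN n by blast
  then show ?thesis using x nL by simp
qed

lemma conjL: assumes x: "x \<in> L" and n: "n \<in> N" shows "iv x \<cdot> (n \<cdot> x) \<in> N"
proof -
  have nL: "n \<in> L" using n nucL by blast
  let ?q = "iv x \<cdot> iv x"
  have q: "?q \<in> N" using sqN x by simp
  have 1: "iv x = ?q \<cdot> x" using RIP[of "iv x" "iv x"] x by simp
  have "?q \<cdot> (x \<cdot> (n \<cdot> x)) = (?q \<cdot> x) \<cdot> (n \<cdot> x)" using nlf[OF q, of x "n \<cdot> x"] x nL by simp
  hence "iv x \<cdot> (n \<cdot> x) = ?q \<cdot> (x \<cdot> (n \<cdot> x))" using 1 by simp
  then show ?thesis using multN[OF q xnx[OF x n]] by simp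
qed

lemma conjR: assumes x: "x \<in> L" and n: "n \<in> N" shows "(x \<cdot> n) \<cdot> iv x \<in> N"
proof -
  have nL: "n \<in> L" using n nucL by blast
  let ?q = "iv x \<cdot> iv x"
  have q: "?q \<in> N" using sqN x by simp
  have 1: "iv x = x \<cdot> ?q" using LIP2[of x "iv x"] x by simp
  have "(x \<cdot> n) \<cdot> (x \<cdot> ?q) = ((x \<cdot> n) \<cdot> x) \<cdot> ?q" using nrt[OF q, of "x \<cdot> n" x] x nL by simp
  also have "\<dots> = (x \<cdot> (n \<cdot> x)) \<cdot> ?q" using nmid[OF n, of x x] x by simp
  finally have "(x \<cdot> n) \<cdot> iv x = (x \<cdot> (n \<cdot> x)) \<cdot> ?q" using 1 by simp
  then show ?thesis using multN[OF xnx[OF x n] q] by simp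
qed

abbreviation "cs x \<equiv> lcoset m x N"

lemma cs_def': "cs x = (\<lambda>n. x \<cdot> n) ` N" by (simp add: lcoset_def)

lemma self_cs: "a \<in> L \<Longrightarrow> a \<in> cs a"
  unfolding cs_def' using eN by (metis er image_eqI)

lemma cs_L: "a \<in> L \<Longrightarrow> x \<in> cs a \<Longrightarrow> x \<in> L"
  unfolding cs_def' using nucL by auto

lemma K1: assumes a: "a \<in> L" and n: "n \<in> N" shows "cs (a \<cdot> n) = cs a"
proof -
  have nL: "n \<in> L" using n nucL by blast
  show ?thesis unfolding cs_def'
  proof (intro equalityI subsetI)
    fix x assume "x \<in> (\<lambda>k. (a \<cdot> n) \<cdot> k) ` N"
    then obtain k where k: "k \<in> N" "x = (a \<cdot> n) \<cdot> k" by blast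
    have "x = a \<cdot> (n \<cdot> k)" using k nmid[OF n, of a k] a nucL by simp
    then show "x \<in> (\<lambda>k. a \<cdot> k) ` N" using multN[OF n k(1)] by blast
  next
    fix x assume "x \<in> (\<lambda>k. a \<cdot> k) ` N"
    then obtain k where k: "k \<in> N" "x = a \<cdot> k" by blast
    have kL: "k \<in> L" using k nucL by blast
    have "(a \<cdot> n) \<cdot> (iv n \<cdot> k) = a \<cdot> (n \<cdot> (iv n \<cdot> k))" using nmid[OF n, of a "iv n \<cdot> k"] a nL kL by simp
    hence "x = (a \<cdot> n) \<cdot> (iv n \<cdot> k)" using k nL kL by simp
    then show "x \<in> (\<lambda>k. (a \<cdot> n) \<cdot> k) ` N" using multN[OF ivN[OF n] k(1)] by blast
  qed
qed

lemma K3: assumes a: "a \<in> L" and b: "b \<in> L" and n: "n \<in> N" and k: "k \<in> N"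
  shows "cs ((a \<cdot> n) \<cdot> (b \<cdot> k)) = cs (a \<cdot> b)"
proof -
  have nL: "n \<in> L" and kL: "k \<in> L" using n k nucL by auto
  let ?n' = "iv b \<cdot> (n \<cdot> b)"
  have n': "?n' \<in> N" using conjL[OF b n] .
  have n'L: "?n' \<in> L" using n' nucL by blast
  have nb: "n \<cdot> b = b \<cdot> ?n'" using b nL by simp
  have "(a \<cdot> n) \<cdot> (b \<cdot> k) = ((a \<cdot> n) \<cdot> b) \<cdot> k" using nrt[OF k, of "a \<cdot> n" b] a nL b by simp
  also have "\<dots> = (a \<cdot> (n \<cdot> b)) \<cdot> k" using nmid[OF n, of a b] a b by simp
  also have "\<dots> = (a \<cdot> (b \<cdot> ?n')) \<cdot> k" using nb by simp
  also have "\<dots> = ((a \<cdot> b) \<cdot> ?n') \<cdot> k" using nrt[OF n', of a b] a b by simp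
  also have "\<dots> = (a \<cdot> b) \<cdot> (?n' \<cdot> k)" using nrt[OF k, of "a \<cdot> b" ?n'] a b n'L by simp
  finally show ?thesis using K1[of "a \<cdot> b" "?n' \<cdot> k"] multN[OF n' k] a b by simp
qed

lemma mem_cs: "x \<in> cs a \<Longrightarrow> \<exists>n\<in>N. x = a \<cdot> n"
  unfolding cs_def' by blast

lemma cong: assumes "a \<in> L" "b \<in> L" "a' \<in> L" "b' \<in> L" "cs a = cs a'" "cs b = cs b'"
  shows "cs (a \<cdot> b) = cs (a' \<cdot> b')"
proof -
  have "a' \<in> cs a" "b' \<in> cs b" using assms self_cs by auto
  then obtain n k where "n \<in> N" "k \<in> N" "a' = a \<cdot> n" "b' = b \<cdot> k" using mem_cs by blast
  then show ?thesis using K3 assms by simp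
qed

lemma FM: assumes a: "a \<in> L" and b: "b \<in> L"
  shows "factor_mult m N (cs a) (cs b) = cs (a \<cdot> b)"
proof -
  have 1: "(SOME x. x \<in> cs a) \<in> cs a" using someI[of "\<lambda>x. x \<in> cs a"] self_cs[OF a] by blast
  have 2: "(SOME x. x \<in> cs b) \<in> cs b" using someI[of "\<lambda>x. x \<in> cs b"] self_cs[OF b] by blast
  obtain n where n: "n \<in> N" "(SOME x. x \<in> cs a) = a \<cdot> n" using mem_cs[OF 1] by blast
  obtain k where k: "k \<in> N" "(SOME x. x \<in> cs b) = b \<cdot> k" using mem_cs[OF 2] by blast
  show ?thesis unfolding factor_mult_def n(2) k(2) using K3 a b n(1) k(1) by simp
qed

lemma iv_cs: "c \<in> L \<Longrightarrow> cs (iv c) = cs c"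
  using K1[of "iv c" "c \<cdot> c"] sqN[of c] by simp

lemma comm: assumes a: "a \<in> L" and b: "b \<in> L" shows "cs (a \<cdot> b) = cs (b \<cdot> a)"
proof -
  have "cs (a \<cdot> b) = cs (iv (a \<cdot> b))" using iv_cs a b by simp
  also have "\<dots> = cs (iv b \<cdot> iv a)" using iv_mult a b by simp
  also have "\<dots> = cs (b \<cdot> a)" using cong[of "iv b" "iv a" b a] iv_cs a b by simp
  finally show ?thesis .
qed

lemma lcan_cs: assumes "a \<in> L" "x \<in> L" "y \<in> L" "cs (a \<cdot> x) = cs (a \<cdot> y)" shows "cs x = cs y"
  using cong[of "iv a" "a \<cdot> x" "iv a" "a \<cdot> y"] assms by simp

lemma steiner: "steiner_loop (factor_carrier L m N) (factor_mult m N) (cs e)"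
proof -
  let ?F = "factor_carrier L m N"
  let ?f = "factor_mult m N"
  have F: "?F = (\<lambda>x. cs x) ` L" by (simp add: factor_carrier_def)
  have Fe: "\<And>A. A \<in> ?F \<Longrightarrow> \<exists>a\<in>L. A = cs a" using F by blast
  have csF: "\<And>a. a \<in> L \<Longrightarrow> cs a \<in> ?F" using F by blast
  have 1: "cs e \<in> ?F" using csF by simp
  have 2: "\<forall>X\<in>?F. \<forall>Y\<in>?F. ?f X Y \<in> ?F"
  proof (intro ballI)
    fix X Y assume "X \<in> ?F" "Y \<in> ?F"
    then obtain a b where a: "a \<in> L" "X = cs a" and b: "b \<in> L" "Y = cs b" using Fe by blast
    show "?f X Y \<in> ?F" using a b FM csF by simp
  qed
  have 3: "\<forall>X\<in>?F. ?f (cs e) X = X \<and> ?f X (cs e) = X"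
  proof (intro ballI)
    fix X assume "X \<in> ?F"
    then obtain a where a: "a \<in> L" "X = cs a" using Fe by blast
    show "?f (cs e) X = X \<and> ?f X (cs e) = X" using a FM[of e a] FM[of a e] by simp
  qed
  have 4: "\<forall>A\<in>?F. \<forall>B\<in>?F. \<exists>!X. X \<in> ?F \<and> ?f A X = B"
  proof (intro ballI)
    fix A B assume "A \<in> ?F" "B \<in> ?F"
    then obtain a b where a: "a \<in> L" "A = cs a" and b: "b \<in> L" "B = cs b" using Fe by blast
    show "\<exists>!X. X \<in> ?F \<and> ?f A X = B"
    proof (rule ex1I[of _ "cs (iv a \<cdot> b)"])
      show "cs (iv a \<cdot> b) \<in> ?F \<and> ?f A (cs (iv a \<cdot> b)) = B" using a b csF FM by simp
    next
      fix X assume X: "X \<in> ?F \<and> ?f A X = B"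
      then obtain x where x: "x \<in> L" "X = cs x" using Fe by blast
      have "cs (a \<cdot> x) = cs (a \<cdot> (iv a \<cdot> b))" using X x a b FM by simp
      then show "X = cs (iv a \<cdot> b)" using lcan_cs[of a x "iv a \<cdot> b"] x a b by simp
    qed
  qed
  have 5: "\<forall>A\<in>?F. \<forall>B\<in>?F. \<exists>!X. X \<in> ?F \<and> ?f X A = B"
  proof (intro ballI)
    fix A B assume "A \<in> ?F" "B \<in> ?F"
    then obtain a b where a: "a \<in> L" "A = cs a" and b: "b \<in> L" "B = cs b" using Fe by blast
    show "\<exists>!X. X \<in> ?F \<and> ?f X A = B"
    proof (rule ex1I[of _ "cs (iv a \<cdot> b)"])
      have "cs ((iv a \<cdot> b) \<cdot> a) = cs (a \<cdot> (iv a \<cdot> b))" using comm a b by simp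
      then show "cs (iv a \<cdot> b) \<in> ?F \<and> ?f (cs (iv a \<cdot> b)) A = B" using a b csF FM by simp
    next
      fix X assume X: "X \<in> ?F \<and> ?f X A = B"
      then obtain x where x: "x \<in> L" "X = cs x" using Fe by blast
      have "cs (x \<cdot> a) = cs b" using X x a b FM by simp
      hence "cs (a \<cdot> x) = cs (a \<cdot> (iv a \<cdot> b))" using comm x a b by simp
      then show "X = cs (iv a \<cdot> b)" using lcan_cs[of a x "iv a \<cdot> b"] x a b by simp
    qed
  qed
  have 6: "\<forall>X\<in>?F. \<forall>Y\<in>?F. ?f X X = cs e \<and> ?f (?f Y X) X = Y \<and> ?f X Y = ?f Y X"
  proof (intro ballI)
    fix X Y assume "X \<in> ?F" "Y \<in> ?F"
    then obtain a b where a: "a \<in> L" "X = cs a" and b: "b \<in> L" "Y = cs b" using Fe by blast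
    have "cs (a \<cdot> a) = cs e" using K1[of e "a \<cdot> a"] sqN a by simp
    moreover have "cs ((b \<cdot> a) \<cdot> a) = cs b" using K1[of b "a \<cdot> a"] sqN a b RAlt by simp
    moreover have "cs (a \<cdot> b) = cs (b \<cdot> a)" using comm a b by simp
    ultimately show "?f X X = cs e \<and> ?f (?f Y X) X = Y \<and> ?f X Y = ?f Y X"
      using a b FM by simp
  qed
  show ?thesis unfolding steiner_loop_def loop_def using 1 2 3 4 5 6 by blast
qed

end

theorem proposition2p6:
  fixes L :: "'a set" and m :: "'a \<Rightarrow> 'a \<Rightarrow> 'a" and e :: 'a
  assumes "C_loop L m e"
  shows "steiner_loop (factor_carrier L m (nucleus L m)) (factor_mult m (nucleus L m))
           (lcoset m e (nucleus L m))"
proof -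
  interpret cl L m e using assms by (unfold_locales)
  show ?thesis by (rule steiner)
qed

end
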